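(* Let $S$ be a numerical semigroup with minimal generators $a_1<a_2<\cdots<a_\nu$ ($\nu\ge 2$), multiplicity $\mu=a_1$ and conductor $c$, and suppose $a_2>\frac{c+\mu}{3}$. Let $\pi:\mathbb{Z}\to\mathbb{Z}/\mu\mathbb{Z}$ be the quotient map, $P=\{a_1,\dots,a_\nu\}$, $P_1=\{a\in P\setminus\{\mu\}: \tfrac13(c+\mu)<a<\tfrac12(c+\mu)\}$, $P_2=\{a\in P\setminus\{\mu\}: \tfrac12(c+\mu)\le a<\tfrac23(c+\mu)\}$, and $A=\pi(P)$, $A_1=\pi(P_1)$, $A_2=\pi(P_2)$. Then $$\mathbb{Z}/\mu\mathbb{Z}=A\cup(A_1+A_1)\cup(A_1+A_2).$$
   Context: A numerical semigroup is a submonoid $S\subseteq\mathbb{N}$ (containing $0$, closed under addition) with finite complement. Its minimal generating set is the unique minimal set of generators; its cardinality $\nu$ is the embedding dimension, and the smallest minimal generator $\mu$ is the multiplicity. The conductor $c$ is the least integer with $c+\mathbb{N}\subseteq S$ (i.e. Frobenius number plus one). For subsets $X,Y$ of $\mathbb{Z}/\mu\mathbb{Z}$, $X+Y=\{x+y: x\in X,y\in Y\}$. *)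

theory Defs
  imports Main
begin

definition numerical_semigroup :: "nat set \<Rightarrow> bool" where
  "numerical_semigroup S \<longleftrightarrow> 0 \<in> S \<and> (\<forall>x\<in>S. \<forall>y\<in>S. x + y \<in> S) \<and> finite (UNIV - S)"

definition min_gens :: "nat set \<Rightarrow> nat set" where
  "min_gens S = {a \<in> S. a \<noteq> 0 \<and> \<not> (\<exists>x\<in>S. \<exists>y\<in>S. x \<noteq> 0 \<and> y \<noteq> 0 \<and> a = x + y)}"

definition multiplicity_ns :: "nat set \<Rightarrow> nat" where
  "multiplicity_ns S = Min (min_gens S)"

definition conductor :: "nat set \<Rightarrow> nat" where
  "conductor S = (LEAST c. \<forall>n\<ge>c. n \<in> S)"

end

theory Submission
  imports Defs
begin

lemma mu_le:
  assumes ns: "numerical_semigroup S" and fin: "finite (min_gens S)"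
  shows "x \<in> S \<Longrightarrow> x \<noteq> 0 \<Longrightarrow> Min (min_gens S) \<le> x"
proof (induction x rule: less_induct)
  case (less x)
  show ?case
  proof (cases "x \<in> min_gens S")
    case True then show ?thesis using fin by simp
  next
    case False
    then obtain u v where "u \<in> S" "v \<in> S" "u \<noteq> 0" "v \<noteq> 0" "x = u + v"
      using less.prems unfolding min_gens_def by blast
    then have "Min (min_gens S) \<le> u" using less.IH[of u] by simp
    then show ?thesis using \<open>x = u + v\<close> by simp
  qed
qed

lemma a2_le:
  assumes ns: "numerical_semigroup S" and fin: "finite (min_gens S)"
  shows "x \<in> S \<Longrightarrow> x \<noteq> 0 \<Longrightarrow> (\<forall>z\<in>S. x \<noteq> Min (min_gens S) + z)
     \<Longrightarrow> Min (min_gens S - {Min (min_gens S)}) \<le> x"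
proof (induction x rule: less_induct)
  case (less x)
  have z: "0 \<in> S" using ns unfolding numerical_semigroup_def by simp
  show ?case
  proof (cases "x \<in> min_gens S")
    case True
    have "x \<noteq> Min (min_gens S)" using less.prems(3) z by force
    then show ?thesis using fin True by simp
  next
    case False
    then obtain u v where uv: "u \<in> S" "v \<in> S" "u \<noteq> 0" "v \<noteq> 0" "x = u + v"
      using less.prems unfolding min_gens_def by blast
    have "\<forall>z\<in>S. u \<noteq> Min (min_gens S) + z"
    proof
      fix z assume "z \<in> S"
      then have "z + v \<in> S" using uv ns unfolding numerical_semigroup_def by blast
      then show "u \<noteq> Min (min_gens S) + z" using less.prems(3) uv by auto
    qed
    then have "Min (min_gens S - {Min (min_gens S)}) \<le> u" using less.IH[of u] uv by simp
    then show ?thesis using uv by simp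
  qed
qed

theorem proposition2p1:
  fixes S :: "nat set"
  assumes "numerical_semigroup S"
    and "card (min_gens S) \<ge> 2"
    and "3 * Min (min_gens S - {multiplicity_ns S}) > conductor S + multiplicity_ns S"
  shows "let \<mu> = multiplicity_ns S; c = conductor S; P = min_gens S;
             P1 = {a \<in> P - {\<mu>}. c + \<mu> < 3 * a \<and> 2 * a < c + \<mu>};
             P2 = {a \<in> P - {\<mu>}. c + \<mu> \<le> 2 * a \<and> 3 * a < 2 * (c + \<mu>)};
             A = (\<lambda>a. a mod \<mu>) ` P; A1 = (\<lambda>a. a mod \<mu>) ` P1; A2 = (\<lambda>a. a mod \<mu>) ` P2
         in {0..<\<mu>} = A \<union> {(x + y) mod \<mu> | x y. x \<in> A1 \<and> y \<in> A1}
                        \<union> {(x + y) mod \<mu> | x y. x \<in> A1 \<and> y \<in> A2}"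
proof -
  note ns = assms(1)
  have fin: "finite (min_gens S)" using assms(2) card.infinite by fastforce
  have ne: "min_gens S \<noteq> {}" using assms(2) by auto
  define \<mu> where "\<mu> = multiplicity_ns S"
  define c where "c = conductor S"
  define a2 where "a2 = Min (min_gens S - {\<mu>})"
  have mu: "\<mu> = Min (min_gens S)" unfolding \<mu>_def multiplicity_ns_def ..
  have muin: "\<mu> \<in> min_gens S" using fin ne mu by simp
  have mupos: "\<mu> > 0" using muin unfolding min_gens_def by simp
  have z: "0 \<in> S" and add: "\<And>x y. x \<in> S \<Longrightarrow> y \<in> S \<Longrightarrow> x + y \<in> S"
    and cof: "finite (UNIV - S)" using ns unfolding numerical_semigroup_def by auto
  have cex: "\<exists>c. \<forall>n\<ge>c. n \<in> S"
  proof -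
    obtain m where "\<forall>n\<in>UNIV - S. n < m" using cof finite_nat_set_iff_bounded by blast
    then show ?thesis by (metis Diff_iff UNIV_I not_le)
  qed
  have cond: "\<And>n. n \<ge> c \<Longrightarrow> n \<in> S"
    using LeastI_ex[OF cex] unfolding c_def conductor_def by blast
  have a2hyp: "3 * a2 > c + \<mu>" using assms(3) unfolding a2_def c_def \<mu>_def by simp
  have a2le: "\<And>x. x \<in> S \<Longrightarrow> x \<noteq> 0 \<Longrightarrow> (\<forall>z\<in>S. x \<noteq> \<mu> + z) \<Longrightarrow> a2 \<le> x"
    using a2_le[OF ns fin] unfolding a2_def mu by blast
  have mule: "\<And>x. x \<in> S \<Longrightarrow> x \<noteq> 0 \<Longrightarrow> \<mu> \<le> x" using mu_le[OF ns fin] mu by blast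
  let ?P = "min_gens S"
  let ?P1 = "{a \<in> ?P - {\<mu>}. c + \<mu> < 3 * a \<and> 2 * a < c + \<mu>}"
  let ?P2 = "{a \<in> ?P - {\<mu>}. c + \<mu> \<le> 2 * a \<and> 3 * a < 2 * (c + \<mu>)}"
  let ?A = "(\<lambda>a. a mod \<mu>) ` ?P"
  let ?A1 = "(\<lambda>a. a mod \<mu>) ` ?P1"
  let ?A2 = "(\<lambda>a. a mod \<mu>) ` ?P2"
  have "{0..<\<mu>} = ?A \<union> {(x + y) mod \<mu> | x y. x \<in> ?A1 \<and> y \<in> ?A1}
                        \<union> {(x + y) mod \<mu> | x y. x \<in> ?A1 \<and> y \<in> ?A2}"
  proof
    show "?A \<union> {(x + y) mod \<mu> | x y. x \<in> ?A1 \<and> y \<in> ?A1}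
                        \<union> {(x + y) mod \<mu> | x y. x \<in> ?A1 \<and> y \<in> ?A2} \<subseteq> {0..<\<mu>}"
      using mupos by auto
  next
    show "{0..<\<mu>} \<subseteq> ?A \<union> {(x + y) mod \<mu> | x y. x \<in> ?A1 \<and> y \<in> ?A1}
                        \<union> {(x + y) mod \<mu> | x y. x \<in> ?A1 \<and> y \<in> ?A2}"
    proof
      fix r assume r: "r \<in> {0..<\<mu>}"
      show "r \<in> ?A \<union> {(x + y) mod \<mu> | x y. x \<in> ?A1 \<and> y \<in> ?A1}
                        \<union> {(x + y) mod \<mu> | x y. x \<in> ?A1 \<and> y \<in> ?A2}"
      proof (cases "r = 0")
        case True
        then have "r = \<mu> mod \<mu>" by simp
        then show ?thesis using muin by blast
      next
        case False
        have ex: "\<exists>n. n \<in> S \<and> n mod \<mu> = r"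
        proof -
          have "c * \<mu> + r \<ge> c" using mupos by (simp add: trans_le_add1)
          then show ?thesis using cond r by (intro exI[of _ "c * \<mu> + r"]) auto
        qed
        define w where "w = (LEAST n. n \<in> S \<and> n mod \<mu> = r)"
        have w: "w \<in> S" "w mod \<mu> = r" using LeastI_ex[OF ex] unfolding w_def by auto
        have wmin: "\<And>n. n \<in> S \<Longrightarrow> n mod \<mu> = r \<Longrightarrow> w \<le> n"
          unfolding w_def by (simp add: Least_le)
        have w0: "w \<noteq> 0" using w False by (metis mod_0)
        have nomu: "\<forall>z\<in>S. w \<noteq> \<mu> + z"
        proof
          fix z assume "z \<in> S"
          show "w \<noteq> \<mu> + z"
          proof
            assume "w = \<mu> + z"
            then have "z mod \<mu> = r" using w by simp
            then have "w \<le> z" using wmin \<open>z \<in> S\<close> by blast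
            then show False using \<open>w = \<mu> + z\<close> mupos by simp
          qed
        qed
        have wlt: "w < c + \<mu>"
        proof (rule ccontr)
          assume "\<not> w < c + \<mu>"
          then have "w - \<mu> \<in> S" using cond by simp
          moreover have "w = \<mu> + (w - \<mu>)" using \<open>\<not> w < c + \<mu>\<close> by simp
          ultimately show False using nomu by blast
        qed
        show ?thesis
        proof (cases "w \<in> ?P")
          case True then show ?thesis using w by blast
        next
          case False
          then obtain x y where xy: "x \<in> S" "y \<in> S" "x \<noteq> 0" "y \<noteq> 0" "w = x + y"
            using w w0 unfolding min_gens_def by blast
          have nx: "\<forall>z\<in>S. x \<noteq> \<mu> + z"
          proof
            fix z assume "z \<in> S"
            then have "z + y \<in> S" using add xy by blast
            then show "x \<noteq> \<mu> + z" using nomu xy by auto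
          qed
          have ny: "\<forall>z\<in>S. y \<noteq> \<mu> + z"
          proof
            fix z assume "z \<in> S"
            then have "x + z \<in> S" using add xy by blast
            then show "y \<noteq> \<mu> + z" using nomu xy by auto
          qed
          have ax: "a2 \<le> x" using a2le xy nx by blast
          have ay: "a2 \<le> y" using a2le xy ny by blast
          have gen: "\<And>g h. g \<in> S \<Longrightarrow> g \<noteq> 0 \<Longrightarrow> (\<forall>z\<in>S. g \<noteq> \<mu> + z) \<Longrightarrow> g + h = w
              \<Longrightarrow> a2 \<le> h \<Longrightarrow> g \<in> ?P - {\<mu>}"
          proof -
            fix g h assume g: "g \<in> S" "g \<noteq> 0" "\<forall>z\<in>S. g \<noteq> \<mu> + z" "g + h = w" "a2 \<le> h"
            have "g \<noteq> \<mu>" using g(3) z by force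
            moreover have "g \<in> ?P"
            proof (rule ccontr)
              assume "g \<notin> ?P"
              then obtain u v where uv: "u \<in> S" "v \<in> S" "u \<noteq> 0" "v \<noteq> 0" "g = u + v"
                using g unfolding min_gens_def by blast
              have "\<forall>z\<in>S. u \<noteq> \<mu> + z"
              proof
                fix z assume "z \<in> S"
                then have "z + v \<in> S" using add uv by blast
                then show "u \<noteq> \<mu> + z" using g(3) uv by auto
              qed
              then have "a2 \<le> u" using a2le uv by blast
              moreover have "\<forall>z\<in>S. v \<noteq> \<mu> + z"
              proof
                fix z assume "z \<in> S"
                then have "u + z \<in> S" using add uv by blast
                then show "v \<noteq> \<mu> + z" using g(3) uv by auto
              qed
              then have "a2 \<le> v" using a2le uv by blast
              ultimately show False using g(4,5) uv a2hyp wlt by linarith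
            qed
            ultimately show "g \<in> ?P - {\<mu>}" by simp
          qed
          have xP: "x \<in> ?P - {\<mu>}" using gen[OF xy(1,3) nx _ ay] xy by simp
          have yP: "y \<in> ?P - {\<mu>}" using gen[OF xy(2,4) ny _ ax] xy by simp
          have rr: "r = (x mod \<mu> + y mod \<mu>) mod \<mu>" using w xy by (simp add: mod_add_eq)
          have rr': "r = (y mod \<mu> + x mod \<mu>) mod \<mu>" using rr by (simp add: add.commute)
          show ?thesis
          proof (cases "x \<le> y")
            case True
            have "x \<in> ?P1" using xP ax a2hyp wlt xy True by auto
            then have x1: "x mod \<mu> \<in> ?A1" by blast
            show ?thesis
            proof (cases "2 * y < c + \<mu>")
              case True
              then have "y \<in> ?P1" using yP ay a2hyp by auto
              then have "y mod \<mu> \<in> ?A1" by blast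
              then show ?thesis using x1 rr by blast
            next
              case False
              then have "y \<in> ?P2" using yP ax a2hyp wlt xy by auto
              then have "y mod \<mu> \<in> ?A2" by blast
              then show ?thesis using x1 rr by blast
            qed
          next
            case False
            have "y \<in> ?P1" using yP ay a2hyp wlt xy False by auto
            then have y1: "y mod \<mu> \<in> ?A1" by blast
            show ?thesis
            proof (cases "2 * x < c + \<mu>")
              case True
              then have "x \<in> ?P1" using xP ax a2hyp by auto
              then have "x mod \<mu> \<in> ?A1" by blast
              then show ?thesis using y1 rr' by blast
            next
              case False
              then have "x \<in> ?P2" using xP ay a2hyp wlt xy by auto
              then have "x mod \<mu> \<in> ?A2" by blast
              then show ?thesis using y1 rr' by blast
            qed
          qed
        qed
      qed
    qed
  qed
  then show ?thesis unfolding Let_def \<mu>_def c_def .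
qed

end
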